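(* Let $\mathbb{L}$ be an algebraically closed field, $a\in\mathbb{L}^{\times}$, $\Bbbk=\mathbb{L}(x)$ the field of rational functions, and $\sigma$ the automorphism of $\Bbbk$ which is the identity on $\mathbb{L}$ and sends $x\mapsto x+a$. Let $G_\sigma=\{\frac{r}{\sigma(r)}: r\in\Bbbk^\times\}$. Consider the group isomorphism $\mathbb{L}(x)^{\times}\to \mathbb{L}^{\times}\times \mathrm{Fsfun}(\mathbb{L},\mathbb{Z})$, $\alpha\mapsto (c_\alpha,\mathtt{m}_\alpha)$. Then the restriction of this isomorphism to $G_\sigma$ is an isomorphism of $G_\sigma$ onto $\{1\}\times\mathrm{Fsfun}_\sigma(\mathbb{L},\mathbb{Z})$; in other words, $\beta\mapsto \mathtt{m}_\beta$ defines a group isomorphism $G_\sigma\cong \mathrm{Fsfun}_\sigma(\mathbb{L},\mathbb{Z})$.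
   Context: Every $\alpha\in\mathbb{L}(x)^{\times}$ can be uniquely written as $\alpha=c_\alpha\prod_{t\in\mathbb{L}}(x-t)^{\mathtt{m}_\alpha(t)}$ with $c_\alpha\in\mathbb{L}^{\times}$ and $\mathtt{m}_\alpha:\mathbb{L}\to\mathbb{Z}$ a function with finite support (i.e. $\mathtt{m}_\alpha(t)\neq 0$ for only finitely many $t$). $\mathrm{Fsfun}(\mathbb{L},\mathbb{Z})$ denotes the additive group of all functions $\mathbb{L}\to\mathbb{Z}$ with finite support, and $\mathrm{Fsfun}_\sigma(\mathbb{L},\mathbb{Z})$ denotes its subgroup of those $\mathtt{m}$ such that $\sum_{i\in\mathbb{Z}}\mathtt{m}(t+ia)=0$ for every $t\in\mathbb{L}$. *)

theory Defs
  imports "HOL-Computational_Algebra.Polynomial" "HOL-Computational_Algebra.Fraction_Field"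
begin

text \<open>The rational function field L(x) is modelled as the fraction field of L[x].\<close>

definition rf_const :: "'a::field \<Rightarrow> 'a poly fract" where
  "rf_const c = Fract [:c:] 1"

definition rf_X :: "'a::field poly fract" where
  "rf_X = Fract [:0, 1:] 1"

definition rf_shift :: "'a::field \<Rightarrow> 'a poly fract \<Rightarrow> 'a poly fract" where
  "rf_shift a r = (THE s. \<exists>p q. q \<noteq> 0 \<and> r = Fract p q \<and>
                         s = Fract (pcompose p [:a, 1:]) (pcompose q [:a, 1:]))"

definition rf_decomp :: "'a::field poly fract \<Rightarrow> 'a \<Rightarrow> ('a \<Rightarrow> int) \<Rightarrow> bool" where
  "rf_decomp \<alpha> c m \<longleftrightarrow> c \<noteq> 0 \<and> finite {t. m t \<noteq> 0} \<and>
      \<alpha> = rf_const c * (\<Prod>t\<in>{t. m t \<noteq> 0}. (rf_X - rf_const t) powi (m t))"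

definition rf_coef :: "'a::field poly fract \<Rightarrow> 'a" where
  "rf_coef \<alpha> = (THE c. \<exists>m. rf_decomp \<alpha> c m)"

definition rf_mult :: "'a::field poly fract \<Rightarrow> 'a \<Rightarrow> int" where
  "rf_mult \<alpha> = (THE m. \<exists>c. rf_decomp \<alpha> c m)"

definition G_sigma :: "'a::field \<Rightarrow> 'a poly fract set" where
  "G_sigma a = {r / rf_shift a r | r. r \<noteq> 0}"

definition Fsfun :: "('a \<Rightarrow> int) set" where
  "Fsfun = {m. finite {t. m t \<noteq> 0}}"

definition Fsfun_sigma :: "'a::field \<Rightarrow> ('a \<Rightarrow> int) set" where
  "Fsfun_sigma a = {m \<in> Fsfun. \<forall>t.
      sum m ({s. \<exists>i::int. s = t + of_int i * a} \<inter> {s. m s \<noteq> 0}) = 0}"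

end

theory Submission
  imports Defs
begin


definition supp :: "('b \<Rightarrow> int) \<Rightarrow> 'b set" where "supp m = {t. m t \<noteq> 0}"

definition lf :: "'a::field \<Rightarrow> 'a poly fract" where "lf t = rf_X - rf_const t"

definition Pw :: "('a::field \<Rightarrow> int) \<Rightarrow> 'a poly fract" where
  "Pw m = (\<Prod>t\<in>{t. m t \<noteq> 0}. lf t powi (m t))"

lemma decomp_iff: "rf_decomp \<alpha> c m \<longleftrightarrow> c \<noteq> 0 \<and> finite (supp m) \<and> \<alpha> = rf_const c * Pw m"
  unfolding rf_decomp_def Pw_def supp_def lf_def by simp

lemma lf_eq: "lf t = Fract [:-t,1:] 1"
  unfolding lf_def rf_X_def rf_const_def by simp

lemma lf_nz: "lf t \<noteq> 0"
  unfolding lf_eq by (simp add: eq_fract Zero_fract_def)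

lemma rf_const_mult: "rf_const (c * d) = rf_const c * rf_const d"
  unfolding rf_const_def by (simp add: mult.commute)

lemma rf_const_1: "rf_const 1 = 1"
  unfolding rf_const_def by (simp add: One_fract_def one_pCons)

lemma rf_const_nz: "c \<noteq> 0 \<Longrightarrow> rf_const c \<noteq> 0"
  unfolding rf_const_def by (simp add: eq_fract Zero_fract_def)

lemma rf_const_inverse: "rf_const (inverse c) = inverse (rf_const c)"
proof (cases "c = 0")
  case True then show ?thesis by (simp add: rf_const_def Zero_fract_def eq_fract(2))
next
  case False
  have "rf_const (inverse c) * rf_const c = 1"
    using False by (simp add: rf_const_mult[symmetric] rf_const_1)
  then show ?thesis using rf_const_nz[OF False] by (simp add: field_simps)
qed

lemma Pw_superset:
  assumes "finite F" "supp m \<subseteq> F"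
  shows "Pw m = (\<Prod>t\<in>F. lf t powi (m t))"
  unfolding Pw_def using assms unfolding supp_def
  by (intro prod.mono_neutral_left) auto

lemma Pw_add:
  assumes "finite (supp m1)" "finite (supp m2)"
  shows "Pw (\<lambda>t. m1 t + m2 t) = Pw m1 * Pw m2"
proof -
  let ?F = "supp m1 \<union> supp m2"
  have "Pw (\<lambda>t. m1 t + m2 t) = (\<Prod>t\<in>?F. lf t powi (m1 t + m2 t))"
    by (rule Pw_superset) (use assms in \<open>auto simp: supp_def\<close>)
  also have "\<dots> = (\<Prod>t\<in>?F. lf t powi m1 t * lf t powi m2 t)"
    by (intro prod.cong refl power_int_add) (simp add: lf_nz)
  also have "\<dots> = Pw m1 * Pw m2"
    by (simp add: prod.distrib Pw_superset[of ?F] assms)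
  finally show ?thesis .
qed

lemma Pw_zero: "Pw (\<lambda>t. 0) = 1"
  unfolding Pw_def by simp

lemma Pw_nz: "Pw m \<noteq> 0"
  unfolding Pw_def by (cases "finite {t. m t \<noteq> 0}") (auto simp: prod_zero_iff lf_nz)

lemma Pw_minus:
  assumes "finite (supp m)"
  shows "Pw (\<lambda>t. - m t) = inverse (Pw m)"
proof -
  have "Pw (\<lambda>t. - m t) * Pw m = 1"
    using Pw_add[of "\<lambda>t. - m t" m] assms by (simp add: supp_def Pw_zero)
  then show ?thesis using Pw_nz[of m] by (simp add: field_simps)
qed

lemma Pw_delta: "Pw (\<lambda>s. if s = t then 1 else 0) = lf t"
proof -
  have "{s. (if s = t then 1 else 0::int) \<noteq> 0} = {t}" by auto
  then show ?thesis unfolding Pw_def by simp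
qed

definition emb :: "'a::field poly \<Rightarrow> 'a poly fract" where "emb p = Fract p 1"

lemma emb_mult: "emb (p * q) = emb p * emb q" unfolding emb_def by simp
lemma emb_1: "emb 1 = 1" unfolding emb_def by (simp add: One_fract_def)
lemma emb_power: "emb (p ^ n) = emb p ^ n"
  by (induction n) (simp_all add: emb_1 emb_mult)
lemma emb_prod: "emb (\<Prod>t\<in>A. f t) = (\<Prod>t\<in>A. emb (f t))"
  by (induction A rule: infinite_finite_induct) (simp_all add: emb_1 emb_mult)
lemma emb_inj: "emb p = emb q \<Longrightarrow> p = q" unfolding emb_def by (simp add: eq_fract)
lemma lf_emb: "lf t = emb [:-t,1:]" unfolding lf_eq emb_def ..
lemma const_emb: "rf_const c = emb [:c:]" unfolding rf_const_def emb_def ..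

lemma Pw_nonneg:
  assumes "finite (supp m)" "\<And>t. m t \<ge> 0"
  shows "Pw m = emb (\<Prod>t\<in>supp m. [:-t,1:] ^ nat (m t))"
  unfolding Pw_def emb_prod emb_power lf_emb[symmetric] supp_def
  using assms by (intro prod.cong refl) (simp add: power_int_nonneg_exp)

lemma poly_decomp:
  fixes p :: "'a::field poly"
  assumes alg_closed: "\<And>p :: 'a poly. degree p > 0 \<Longrightarrow> \<exists>z. poly p z = 0"
  shows "p \<noteq> 0 \<Longrightarrow> \<exists>c m. c \<noteq> 0 \<and> finite (supp m) \<and> emb p = rf_const c * Pw m"
proof (induction "degree p" arbitrary: p rule: less_induct)
  case less
  show ?case
  proof (cases "degree p = 0")
    case True
    then obtain c where p: "p = [:c:]" by (metis degree_eq_zeroE)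
    with less.prems have "c \<noteq> 0" by simp
    then show ?thesis
      by (intro exI[of _ c] exI[of _ "\<lambda>t. 0"]) (simp add: p supp_def Pw_zero const_emb)
  next
    case False
    then obtain z where "poly p z = 0" using alg_closed by blast
    then obtain q where pq: "p = [:-z,1:] * q" by (metis poly_eq_0_iff_dvd dvdE)
    with less.prems have qnz: "q \<noteq> 0" by auto
    have "degree p = degree q + 1" using pq qnz by (subst pq, subst degree_mult_eq) auto
    then obtain c m where cm: "c \<noteq> 0" "finite (supp m)" "emb q = rf_const c * Pw m"
      using less.hyps[of q] qnz by auto
    let ?d = "\<lambda>s. if s = z then 1 else 0::int"
    have fd: "finite (supp ?d)" by (simp add: supp_def)
    have "emb p = rf_const c * Pw (\<lambda>t. m t + ?d t)"
      unfolding pq emb_mult cm(3) Pw_add[OF cm(2) fd] Pw_delta lf_emb[symmetric] by (simp add: mult_ac)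
    moreover have "finite (supp (\<lambda>t. m t + ?d t))"
      using cm(2) fd by (rule rev_finite_subset[OF finite_UnI]) (auto simp: supp_def)
    ultimately show ?thesis using cm by blast
  qed
qed

lemma rf_decomp_exists:
  fixes \<alpha> :: "'a::field poly fract"
  assumes alg_closed: "\<And>p :: 'a poly. degree p > 0 \<Longrightarrow> \<exists>z. poly p z = 0"
    and nz: "\<alpha> \<noteq> 0"
  shows "\<exists>c m. rf_decomp \<alpha> c m"
proof -
  obtain p q where pq: "\<alpha> = Fract p q" "q \<noteq> 0" by (cases \<alpha>)
  with nz have pnz: "p \<noteq> 0" by (auto simp: Zero_fract_def eq_fract)
  have al: "\<alpha> = emb p * inverse (emb q)" unfolding emb_def pq by simp
  obtain c m where cm: "c \<noteq> 0" "finite (supp m)" "emb p = rf_const c * Pw m"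
    using poly_decomp[OF alg_closed pnz] by blast
  obtain c' m' where cm': "c' \<noteq> 0" "finite (supp m')" "emb q = rf_const c' * Pw m'"
    using poly_decomp[OF alg_closed pq(2)] by blast
  have f2: "finite (supp (\<lambda>t. - m' t))" using cm'(2) by (simp add: supp_def)
  have "\<alpha> = rf_const (c * inverse c') * Pw (\<lambda>t. m t + - m' t)"
    unfolding al cm(3) cm'(3) Pw_add[OF cm(2) f2] Pw_minus[OF cm'(2)] rf_const_mult rf_const_inverse
    by (simp add: field_simps)
  moreover have "finite (supp (\<lambda>t. m t + - m' t))"
    using cm(2) cm'(2) by (rule rev_finite_subset[OF finite_UnI]) (auto simp: supp_def)
  ultimately show ?thesis using cm cm' unfolding decomp_iff
    by (intro exI[of _ "c * inverse c'"] exI[of _ "\<lambda>t. m t + - m' t"]) auto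
qed

lemma root_lemma:
  fixes e :: "'a::field"
  assumes "finite A" "finite B" "t \<in> A" "f t > 0" "t \<notin> B" "e \<noteq> 0"
  shows "smult e (\<Prod>s\<in>A. [:-s,1:] ^ f s) \<noteq> (\<Prod>s\<in>B. [:-s,1:] ^ g s)"
proof
  assume eq: "smult e (\<Prod>s\<in>A. [:-s,1:] ^ f s) = (\<Prod>s\<in>B. [:-s,1:] ^ g s)"
  have "poly (smult e (\<Prod>s\<in>A. [:-s,1:] ^ f s)) t = 0"
    using assms by (auto simp: poly_prod prod_zero_iff)
  moreover have "poly (\<Prod>s\<in>B. [:-s,1:] ^ g s) t \<noteq> 0"
    using assms by (auto simp: poly_prod prod_zero_iff)
  ultimately show False using eq by simp
qed


lemma field_aux1: "(y::'b::field) \<noteq> 0 \<Longrightarrow> c * (x * inverse y) = 1 \<Longrightarrow> c * x = y"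
  by (simp add: field_simps)

lemma Pw_one_core:
  fixes d :: "'a::field \<Rightarrow> int"
  assumes fd: "finite (supp d)" and e: "e \<noteq> 0" and eq: "rf_const e * Pw d = 1"
  shows "e = 1 \<and> d = (\<lambda>t. 0)"
proof -
  define dp where "dp = (\<lambda>t. max (d t) 0)"
  define dn where "dn = (\<lambda>t. max (- d t) 0)"
  have dd: "d = (\<lambda>t. dp t + - dn t)" unfolding dp_def dn_def by (rule ext) simp
  have fp: "finite (supp dp)" by (rule finite_subset[OF _ fd]) (auto simp: supp_def dp_def)
  have fn: "finite (supp dn)" by (rule finite_subset[OF _ fd]) (auto simp: supp_def dn_def)
  have fn': "finite (supp (\<lambda>t. - dn t))" using fn by (simp add: supp_def)
  have "Pw d = Pw dp * inverse (Pw dn)"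
    by (subst dd, subst Pw_add[OF fp fn']) (simp add: Pw_minus[OF fn])
  with eq have "rf_const e * Pw dp = Pw dn" using Pw_nz[of dn] field_aux1 by metis
  define PPp where "PPp = (\<Prod>t\<in>supp dp. [:-t,1:] ^ nat (dp t))"
  define PPn where "PPn = (\<Prod>t\<in>supp dn. [:-t,1:] ^ nat (dn t))"
  have "Pw dp = emb PPp" unfolding PPp_def by (rule Pw_nonneg[OF fp]) (simp add: dp_def)
  moreover have "Pw dn = emb PPn" unfolding PPn_def by (rule Pw_nonneg[OF fn]) (simp add: dn_def)
  ultimately have "emb (smult e PPp) = emb PPn"
    using \<open>rf_const e * Pw dp = Pw dn\<close> by (simp add: const_emb emb_mult[symmetric])
  then have E1: "smult e PPp = PPn" by (rule emb_inj)
  then have E2: "smult (inverse e) PPn = PPp" using e by (simp add: E1[symmetric])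
  have "supp dp = {}"
  proof (rule ccontr)
    assume "supp dp \<noteq> {}"
    then obtain t where t: "t \<in> supp dp" by blast
    then have tp: "nat (dp t) > 0" "t \<notin> supp dn" by (auto simp: supp_def dp_def dn_def)
    have "smult e PPp \<noteq> PPn" unfolding PPp_def PPn_def
      by (rule root_lemma[of "supp dp" "supp dn" t]) (use fp fn t tp e in auto)
    with E1 show False by simp
  qed
  moreover have "supp dn = {}"
  proof (rule ccontr)
    assume "supp dn \<noteq> {}"
    then obtain t where t: "t \<in> supp dn" by blast
    then have tp: "nat (dn t) > 0" "t \<notin> supp dp" by (auto simp: supp_def dp_def dn_def)
    have "smult (inverse e) PPn \<noteq> PPp" unfolding PPp_def PPn_def
      by (rule root_lemma[of "supp dn" "supp dp" t]) (use fp fn t tp e in auto)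
    with E2 show False by simp
  qed
  ultimately have d0: "d = (\<lambda>t. 0)" unfolding dd by (auto simp: supp_def)
  with eq have "emb [:e:] = emb [:1:]" by (simp add: Pw_zero const_emb[symmetric] rf_const_1)
  then have "e = 1" by (drule_tac emb_inj) simp
  with d0 show ?thesis by simp
qed

lemma field_aux2: "(P::'b::field) \<noteq> 0 \<Longrightarrow> C' \<noteq> 0 \<Longrightarrow> C * (P * Q) = C' * P \<Longrightarrow> C * inverse C' * Q = 1"
  by (simp add: field_simps)

lemma rf_decomp_unique:
  assumes "rf_decomp \<alpha> c m" "rf_decomp \<alpha> c' m'"
  shows "c = c' \<and> m = m'"
proof -
  from assms have A: "c \<noteq> 0" "finite (supp m)" "\<alpha> = rf_const c * Pw m"
    and B: "c' \<noteq> 0" "finite (supp m')" "\<alpha> = rf_const c' * Pw m'" by (auto simp: decomp_iff)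
  let ?d = "\<lambda>t. m t + - m' t"
  have fd: "finite (supp ?d)"
    using A(2) B(2) by (rule rev_finite_subset[OF finite_UnI]) (auto simp: supp_def)
  have "m = (\<lambda>t. m' t + ?d t)" by (simp add: fun_eq_iff)
  then have "Pw m = Pw m' * Pw ?d" using Pw_add[OF B(2) fd] by simp
  then have "rf_const c * (Pw m' * Pw ?d) = rf_const c' * Pw m'" using A(3) B(3) by metis
  then have "rf_const c * inverse (rf_const c') * Pw ?d = 1"
    using field_aux2[OF Pw_nz[of m'] rf_const_nz[OF B(1)]] by blast
  then have "rf_const (c * inverse c') * Pw ?d = 1"
    unfolding rf_const_mult rf_const_inverse .
  from Pw_one_core[OF fd _ this] A(1) B(1) have "c * inverse c' = 1" "?d = (\<lambda>t. 0)" by auto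
  then show ?thesis using B(1) by (auto simp: field_simps fun_eq_iff)
qed

lemma rf_decomp_THE:
  assumes "rf_decomp \<alpha> c m"
  shows "rf_coef \<alpha> = c" "rf_mult \<alpha> = m"
proof -
  show "rf_coef \<alpha> = c" unfolding rf_coef_def
  proof (rule the_equality)
    show "\<exists>m. rf_decomp \<alpha> c m" using assms by blast
    show "\<And>c'. \<exists>m. rf_decomp \<alpha> c' m \<Longrightarrow> c' = c" using rf_decomp_unique[OF assms] by blast
  qed
  show "rf_mult \<alpha> = m" unfolding rf_mult_def
  proof (rule the_equality)
    show "\<exists>c. rf_decomp \<alpha> c m" using assms by blast
    show "\<And>m'. \<exists>c. rf_decomp \<alpha> c m' \<Longrightarrow> m' = m" using rf_decomp_unique[OF assms] by blast
  qed
qed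



lemma shift_Fract:
  fixes a :: "'a::field"
  assumes q: "q \<noteq> 0"
  shows "rf_shift a (Fract p q) = Fract (pcompose p [:a,1:]) (pcompose q [:a,1:])"
  unfolding rf_shift_def
proof (rule the_equality)
  show "\<exists>p' q'. q' \<noteq> 0 \<and> Fract p q = Fract p' q' \<and>
        Fract (pcompose p [:a,1:]) (pcompose q [:a,1:]) = Fract (pcompose p' [:a,1:]) (pcompose q' [:a,1:])"
    using q by blast
next
  fix s assume "\<exists>p' q'. q' \<noteq> 0 \<and> Fract p q = Fract p' q' \<and>
        s = Fract (pcompose p' [:a,1:]) (pcompose q' [:a,1:])"
  then obtain p' q' where h: "q' \<noteq> 0" "Fract p q = Fract p' q'"
     "s = Fract (pcompose p' [:a,1:]) (pcompose q' [:a,1:])" by blast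
  have e: "p * q' = p' * q" using h(2) q h(1) by (simp add: eq_fract)
  have nz: "pcompose q [:a,1:] \<noteq> 0" "pcompose q' [:a,1:] \<noteq> 0"
    using q h(1) by (simp_all add: pcompose_eq_0_iff)
  have "pcompose p [:a,1:] * pcompose q' [:a,1:] = pcompose p' [:a,1:] * pcompose q [:a,1:]"
    by (simp add: pcompose_mult[symmetric] e)
  then show "s = Fract (pcompose p [:a,1:]) (pcompose q [:a,1:])"
    using nz h(3) by (simp add: eq_fract)
qed

lemma shift_mult: "rf_shift a (x * y) = rf_shift a x * rf_shift (a::'a::field) y"
proof -
  obtain p q where x: "x = Fract p q" "q \<noteq> 0" by (cases x)
  obtain p' q' where y: "y = Fract p' q'" "q' \<noteq> 0" by (cases y)
  show ?thesis using x y by (simp add: shift_Fract pcompose_mult)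
qed

lemma shift_0: "rf_shift a 0 = (0::'a::field poly fract)"
  unfolding Zero_fract_def by (simp add: shift_Fract pcompose_1 eq_fract)

lemma shift_1: "rf_shift a 1 = (1::'a::field poly fract)"
  unfolding One_fract_def by (simp add: shift_Fract pcompose_1)

lemma shift_inverse: "rf_shift a (inverse x) = inverse (rf_shift (a::'a::field) x)"
proof -
  obtain p q where x: "x = Fract p q" "q \<noteq> 0" by (cases x)
  show ?thesis
  proof (cases "p = 0")
    case True
    then have "x = 0" using x by (simp add: Zero_fract_def eq_fract)
    then show ?thesis by (simp add: shift_0)
  next
    case False
    then show ?thesis using x by (simp add: shift_Fract)
  qed
qed

lemma shift_power: "rf_shift a (x ^ n) = rf_shift (a::'a::field) x ^ n"
  by (induction n) (simp_all add: shift_1 shift_mult)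

lemma shift_powi: "rf_shift a (x powi n) = rf_shift (a::'a::field) x powi n"
  by (simp add: power_int_def shift_power shift_inverse)

lemma shift_prod: "rf_shift a (\<Prod>t\<in>A. f t) = (\<Prod>t\<in>A. rf_shift (a::'a::field) (f t))"
  by (induction A rule: infinite_finite_induct) (simp_all add: shift_1 shift_mult)

lemma shift_const: "rf_shift a (rf_const c) = rf_const (c::'a::field)"
  unfolding rf_const_def by (simp add: shift_Fract pcompose_1)

lemma shift_lf: "rf_shift a (lf t) = lf (t - (a::'a::field))"
  unfolding lf_eq by (simp add: shift_Fract pcompose_1 pcompose_pCons)

lemma shift_Pw:
  fixes a :: "'a::field"
  shows "rf_shift a (Pw n) = Pw (\<lambda>s. n (s + a))"
proof -
  have "rf_shift a (Pw n) = (\<Prod>t\<in>{t. n t \<noteq> 0}. lf (t - a) powi n t)"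
    unfolding Pw_def shift_prod shift_powi shift_lf ..
  also have "\<dots> = Pw (\<lambda>s. n (s + a))"
    unfolding Pw_def
    by (rule prod.reindex_bij_witness[of _ "\<lambda>s. s + a" "\<lambda>t. t - a"]) auto
  finally show ?thesis .
qed

lemma shift_decomp:
  fixes a :: "'a::field"
  assumes "rf_decomp r c n"
  shows "rf_decomp (rf_shift a r) c (\<lambda>s. n (s + a))"
proof -
  have f: "finite (supp (\<lambda>s. n (s + a)))"
  proof -
    have "supp (\<lambda>s. n (s + a)) = (\<lambda>t. t - a) ` supp n"
      by (auto simp: supp_def image_iff intro!: exI[of _ "_ + a"])
    then show ?thesis using assms by (simp add: decomp_iff)
  qed
  show ?thesis using assms f by (auto simp: decomp_iff shift_mult shift_const shift_Pw)
qed



lemma field_aux3: "(C::'b::field) \<noteq> 0 \<Longrightarrow> (C * X) * inverse (C * Y) = X * inverse Y"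
  by (simp add: field_simps)

lemma G_decomp:
  fixes a :: "'a::field"
  assumes "rf_decomp r c n"
  shows "rf_decomp (r / rf_shift a r) 1 (\<lambda>s. n s - n (s + a))"
proof -
  have d2: "rf_decomp (rf_shift a r) c (\<lambda>s. n (s + a))" by (rule shift_decomp[OF assms])
  from assms d2 have A: "c \<noteq> 0" "finite (supp n)" "r = rf_const c * Pw n"
    and B: "finite (supp (\<lambda>s. n (s + a)))" "rf_shift a r = rf_const c * Pw (\<lambda>s. n (s + a))"
    by (auto simp: decomp_iff)
  have B': "finite (supp (\<lambda>s. - n (s + a)))" using B(1) by (simp add: supp_def)
  have fd: "finite (supp (\<lambda>s. n s - n (s + a)))"
    using A(2) B(1) by (rule rev_finite_subset[OF finite_UnI]) (auto simp: supp_def)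
  have "r / rf_shift a r = (rf_const c * Pw n) * inverse (rf_const c * Pw (\<lambda>s. n (s + a)))"
    unfolding B(2) by (subst A(3)) (simp add: divide_inverse)
  also have "\<dots> = Pw n * inverse (Pw (\<lambda>s. n (s + a)))"
    using rf_const_nz[OF A(1)] by (simp add: field_aux3)
  also have "\<dots> = Pw (\<lambda>s. n s + - n (s + a))"
    by (simp only: Pw_add[OF A(2) B'] Pw_minus[OF B(1)])
  finally have "r / rf_shift a r = rf_const 1 * Pw (\<lambda>s. n s - n (s + a))"
    by (simp add: rf_const_1)
  then show ?thesis using fd by (simp add: decomp_iff)
qed

definition orb :: "'a::field \<Rightarrow> 'a \<Rightarrow> 'a set" where
  "orb a t = {s. \<exists>i::int. s = t + of_int i * a}"

lemma orb_shift: "(t + of_int j * a \<in> orb a u) \<longleftrightarrow> (t \<in> orb a u)"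
proof
  assume "t + of_int j * a \<in> orb a u"
  then obtain i where "t + of_int j * a = u + of_int i * a" unfolding orb_def by blast
  then have "t = u + of_int (i - j) * a" by (simp add: algebra_simps)
  then show "t \<in> orb a u" unfolding orb_def by blast
next
  assume "t \<in> orb a u"
  then obtain i where "t = u + of_int i * a" unfolding orb_def by blast
  then have "t + of_int j * a = u + of_int (i + j) * a" by (simp add: algebra_simps)
  then show "t + of_int j * a \<in> orb a u" unfolding orb_def by blast
qed

lemma orb_plus: "(t + a \<in> orb a u) \<longleftrightarrow> (t \<in> orb a u)"
  using orb_shift[of t 1 a u] by simp

lemma orb_self: "t \<in> orb a t"
  unfolding orb_def by (intro CollectI exI[of _ 0]) simp

lemma sum_supp:
  assumes "finite A" "finite B" "A \<inter> supp f = B \<inter> supp f"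
  shows "sum f A = sum (f::'b \<Rightarrow> int) B"
proof -
  have "sum f A = sum f (A \<inter> supp f)"
    by (rule sum.mono_neutral_right) (use assms in \<open>auto simp: supp_def\<close>)
  moreover have "sum f B = sum f (B \<inter> supp f)"
    by (rule sum.mono_neutral_right) (use assms in \<open>auto simp: supp_def\<close>)
  ultimately show ?thesis using assms(3) by simp
qed

lemma Fsfun_sigma_iff: "m \<in> Fsfun_sigma a \<longleftrightarrow> finite (supp m) \<and> (\<forall>u. sum m (orb a u \<inter> supp m) = 0)"
  unfolding Fsfun_sigma_def Fsfun_def orb_def supp_def by simp

lemma diff_in_sigma:
  fixes a :: "'a::field"
  assumes fn: "finite (supp n)"
  shows "(\<lambda>s. n s - n (s + a)) \<in> Fsfun_sigma a"
proof -
  let ?m = "\<lambda>s. n s - n (s + a)"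
  define F where "F = supp n \<union> (\<lambda>t. t - a) ` supp n"
  have fF: "finite F" using fn unfolding F_def by simp
  have sF: "supp ?m \<subseteq> F"
  proof
    fix x assume "x \<in> supp ?m"
    then have "n x \<noteq> 0 \<or> n (x + a) \<noteq> 0" by (auto simp: supp_def)
    then show "x \<in> F" unfolding F_def supp_def by (auto intro: image_eqI[of x _ "x + a"])
  qed
  have fm: "finite (supp ?m)" using fF sF finite_subset by blast
  have "sum ?m (orb a u \<inter> supp ?m) = 0" for u
  proof -
    have "sum ?m (orb a u \<inter> supp ?m) = sum ?m (orb a u \<inter> F)"
      by (rule sum_supp) (use fF fm sF in auto)
    also have "\<dots> = sum n (orb a u \<inter> F) - sum (\<lambda>s. n (s + a)) (orb a u \<inter> F)"
      by (simp add: sum_subtractf)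
    also have "sum n (orb a u \<inter> F) = sum n (orb a u \<inter> supp n)"
      by (rule sum_supp) (use fF fn in \<open>auto simp: F_def\<close>)
    also have "sum (\<lambda>s. n (s + a)) (orb a u \<inter> F) = sum n ((\<lambda>s. s + a) ` (orb a u \<inter> F))"
      by (subst sum.reindex) (auto simp: inj_on_def)
    also have "\<dots> = sum n (orb a u \<inter> supp n)"
    proof (rule sum_supp)
      show "finite ((\<lambda>s. s + a) ` (orb a u \<inter> F))" using fF by simp
      show "finite (orb a u \<inter> supp n)" using fn by simp
      show "(\<lambda>s. s + a) ` (orb a u \<inter> F) \<inter> supp n = orb a u \<inter> supp n \<inter> supp n"
      proof (intro equalityI subsetI)
        fix x assume "x \<in> (\<lambda>s. s + a) ` (orb a u \<inter> F) \<inter> supp n"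
        then show "x \<in> orb a u \<inter> supp n \<inter> supp n" by (auto simp: orb_plus)
      next
        fix x assume x: "x \<in> orb a u \<inter> supp n \<inter> supp n"
        have "x - a \<in> orb a u" using x orb_plus[of "x - a" a u] by simp
        moreover have "x - a \<in> F" using x unfolding F_def by auto
        ultimately show "x \<in> (\<lambda>s. s + a) ` (orb a u \<inter> F) \<inter> supp n"
          using x by (auto simp: image_iff intro!: bexI[of _ "x - a"])
      qed
    qed
    finally show ?thesis by simp
  qed
  then show ?thesis using fm by (simp add: Fsfun_sigma_iff)
qed



definition cob :: "'a::field \<Rightarrow> ('a \<Rightarrow> int) \<Rightarrow> bool" where
  "cob a m \<longleftrightarrow> (\<exists>n. finite (supp n) \<and> m = (\<lambda>s. n s - n (s + a)))"

definition dl :: "'a \<Rightarrow> 'a \<Rightarrow> int" where "dl t = (\<lambda>s. if s = t then 1 else 0)"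

lemma supp_dl: "supp (dl t) = {t}" unfolding supp_def dl_def by auto

lemma cob_add: "cob a m1 \<Longrightarrow> cob a m2 \<Longrightarrow> cob a (\<lambda>s. m1 s + m2 s)"
proof -
  assume "cob a m1" "cob a m2"
  then obtain n1 n2 where n: "finite (supp n1)" "m1 = (\<lambda>s. n1 s - n1 (s + a))"
    "finite (supp n2)" "m2 = (\<lambda>s. n2 s - n2 (s + a))" unfolding cob_def by blast
  have "finite (supp (\<lambda>s. n1 s + n2 s))"
    using n(1) n(3) by (rule rev_finite_subset[OF finite_UnI]) (auto simp: supp_def)
  then show ?thesis unfolding cob_def using n
    by (intro exI[of _ "\<lambda>s. n1 s + n2 s"]) (auto simp: fun_eq_iff)
qed

lemma cob_smult: "cob a m \<Longrightarrow> cob a (\<lambda>s. k * m s)"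
proof -
  assume "cob a m"
  then obtain n where n: "finite (supp n)" "m = (\<lambda>s. n s - n (s + a))" unfolding cob_def by blast
  have "finite (supp (\<lambda>s. k * n s))" by (rule finite_subset[OF _ n(1)]) (auto simp: supp_def)
  then show ?thesis unfolding cob_def using n
    by (intro exI[of _ "\<lambda>s. k * n s"]) (simp add: right_diff_distrib)
qed

lemma cob_step: "cob a (\<lambda>s. dl t s - dl (t - a) s)"
  unfolding cob_def
  by (intro exI[of _ "dl t"]) (auto simp: supp_dl, auto simp: dl_def fun_eq_iff algebra_simps)

lemma cob_nat: "cob a (\<lambda>s. dl t s - dl (t - of_nat j * a) s)"
proof (induction j)
  case 0
  then show ?case unfolding cob_def by (intro exI[of _ "\<lambda>s. 0"]) (auto simp: supp_def)
next
  case (Suc j)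
  have "cob a (\<lambda>s. (dl t s - dl (t - of_nat j * a) s) + (dl (t - of_nat j * a) s - dl (t - of_nat j * a - a) s))"
    by (rule cob_add[OF Suc cob_step])
  moreover have "t - of_nat j * a - a = t - of_nat (Suc j) * a" by (simp add: algebra_simps)
  ultimately show ?case by simp
qed

lemma cob_pair: "cob a (\<lambda>s. dl t s - dl (t + of_int i * a) s)"
proof (cases "i \<ge> 0")
  case False
  then obtain j where ij: "i = - int j" by (metis nonpos_int_cases linear)
  then show ?thesis using cob_nat[of a t j] by simp
next
  case True
  then obtain j where ij: "i = int j" by (metis nonneg_int_cases)
  have "cob a (\<lambda>s. (-1) * (dl (t + of_int i * a) s - dl (t + of_int i * a - of_nat j * a) s))"
    by (rule cob_smult[OF cob_nat])
  then show ?thesis using ij by simp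
qed



lemma main_cob:
  fixes a :: "'a::field"
  shows "finite (supp m) \<Longrightarrow> (\<forall>u. sum m (orb a u \<inter> supp m) = 0) \<Longrightarrow> cob a m"
proof (induction "card (supp m)" arbitrary: m rule: less_induct)
  case less
  show ?case
  proof (cases "supp m = {}")
    case True
    then have "m = (\<lambda>s. 0 - 0)" by (auto simp: supp_def fun_eq_iff)
    then show ?thesis unfolding cob_def by (intro exI[of _ "\<lambda>s. 0"]) (auto simp: supp_def)
  next
    case False
    then obtain t where t: "t \<in> supp m" by blast
    have "\<exists>s\<in>orb a t \<inter> supp m. s \<noteq> t"
    proof (rule ccontr)
      assume "\<not> ?thesis"
      then have "orb a t \<inter> supp m = {t}" using t orb_self[of t a] by auto
      then have "sum m (orb a t \<inter> supp m) = m t" by simp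
      moreover have "sum m (orb a t \<inter> supp m) = 0" using less.prems(2) by blast
      moreover have "m t \<noteq> 0" using t by (simp add: supp_def)
      ultimately show False by simp
    qed
    then obtain s where s: "s \<in> orb a t" "s \<in> supp m" "s \<noteq> t" by blast
    then obtain i where si: "s = t + of_int i * a" unfolding orb_def by blast
    define m' where "m' = (\<lambda>v. m v - m t * (dl t v - dl s v))"
    have sub: "supp m' \<subseteq> supp m - {t}"
      using s t unfolding m'_def supp_def dl_def by auto
    then have fm': "finite (supp m')" using less.prems(1) finite_subset by blast
    have lt: "card (supp m') < card (supp m)"
    proof (rule psubset_card_mono[OF less.prems(1)])
      show "supp m' \<subset> supp m" using sub t by blast
    qed
    have "sum m' (orb a u \<inter> supp m') = 0" for u
    proof -
      let ?X = "orb a u \<inter> supp m"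
      have "sum m' (orb a u \<inter> supp m') = sum m' ?X"
        by (rule sum_supp) (use fm' less.prems(1) sub in auto)
      also have "\<dots> = sum m ?X - m t * (sum (dl t) ?X - sum (dl s) ?X)"
        unfolding m'_def by (simp add: sum_subtractf sum_distrib_left[symmetric])
      also have "sum (dl t) ?X = sum (dl s) ?X"
      proof -
        have "t \<in> orb a u \<longleftrightarrow> s \<in> orb a u" unfolding si by (rule orb_shift[symmetric])
        then have "t \<in> ?X \<longleftrightarrow> s \<in> ?X" using s(2) t by blast
        moreover have "finite ?X" using less.prems(1) by simp
        ultimately show ?thesis unfolding dl_def by (simp add: sum.delta')
      qed
      finally show ?thesis using less.prems(2) by simp
    qed
    then have "cob a m'" using less.hyps[OF lt fm'] by blast
    then have "cob a (\<lambda>v. m' v + m t * (dl t v - dl (t + of_int i * a) v))"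
      by (rule cob_add[OF _ cob_smult[OF cob_pair]])
    moreover have "(\<lambda>v. m' v + m t * (dl t v - dl (t + of_int i * a) v)) = m"
      unfolding m'_def si by simp
    ultimately show ?thesis by simp
  qed
qed



theorem proposition4:
  fixes a :: "'a::field"
  assumes alg_closed: "\<And>p :: 'a poly. degree p > 0 \<Longrightarrow> \<exists>z. poly p z = 0"
    and a_nz: "a \<noteq> 0"
  shows "bij_betw (\<lambda>\<beta>. (rf_coef \<beta>, rf_mult \<beta>)) (G_sigma a) ({1} \<times> Fsfun_sigma a)
       \<and> (\<forall>\<beta>\<in>G_sigma a. \<forall>\<gamma>\<in>G_sigma a. \<beta> * \<gamma> \<in> G_sigma a \<and> inverse \<beta> \<in> G_sigma a
             \<and> rf_mult (\<beta> * \<gamma>) = (\<lambda>t. rf_mult \<beta> t + rf_mult \<gamma> t))"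
proof -
  have memG: "\<beta> \<in> G_sigma a \<longleftrightarrow> (\<exists>r. r \<noteq> 0 \<and> \<beta> = r / rf_shift a r)" for \<beta>
    unfolding G_sigma_def by auto
  have key: "rf_decomp \<beta> 1 (rf_mult \<beta>) \<and> rf_coef \<beta> = 1 \<and> rf_mult \<beta> \<in> Fsfun_sigma a"
    if "\<beta> \<in> G_sigma a" for \<beta>
  proof -
    have "\<exists>r. r \<noteq> 0 \<and> \<beta> = r / rf_shift a r" using that memG[of \<beta>] by simp
    then obtain r where r: "r \<noteq> 0" "\<beta> = r / rf_shift a r" by blast
    obtain c n where cn: "rf_decomp r c n" using rf_decomp_exists[OF alg_closed r(1)] by blast
    have d: "rf_decomp \<beta> 1 (\<lambda>s. n s - n (s + a))" unfolding r(2) by (rule G_decomp[OF cn])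
    have "finite (supp n)" using cn by (simp add: decomp_iff)
    then show ?thesis using d rf_decomp_THE[OF d] diff_in_sigma by simp
  qed
  have part2: "\<beta> * \<gamma> \<in> G_sigma a \<and> inverse \<beta> \<in> G_sigma a
             \<and> rf_mult (\<beta> * \<gamma>) = (\<lambda>t. rf_mult \<beta> t + rf_mult \<gamma> t)"
    if b: "\<beta> \<in> G_sigma a" and g: "\<gamma> \<in> G_sigma a" for \<beta> \<gamma>
  proof (intro conjI)
    have "\<exists>r. r \<noteq> 0 \<and> \<beta> = r / rf_shift a r" using b memG[of \<beta>] by simp
    then obtain r where r: "r \<noteq> 0" "\<beta> = r / rf_shift a r" by blast
    have "\<exists>s. s \<noteq> 0 \<and> \<gamma> = s / rf_shift a s" using g memG[of \<gamma>] by simp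
    then obtain s where s: "s \<noteq> 0" "\<gamma> = s / rf_shift a s" by blast
    have "\<beta> * \<gamma> = (r * s) / rf_shift a (r * s)" unfolding r(2) s(2) shift_mult by simp
    moreover have "r * s \<noteq> 0" using r s by simp
    ultimately show "\<beta> * \<gamma> \<in> G_sigma a" unfolding memG by blast
    have "inverse \<beta> = inverse r / rf_shift a (inverse r)" unfolding r(2) shift_inverse
      by (simp add: divide_inverse mult.commute)
    moreover have "inverse r \<noteq> 0" using r by simp
    ultimately show "inverse \<beta> \<in> G_sigma a" unfolding memG by blast
    have db: "rf_decomp \<beta> 1 (rf_mult \<beta>)" and dg: "rf_decomp \<gamma> 1 (rf_mult \<gamma>)" using key b g by auto
    then have fb: "finite (supp (rf_mult \<beta>))" and fg: "finite (supp (rf_mult \<gamma>))"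
      and eb: "\<beta> = Pw (rf_mult \<beta>)" and eg: "\<gamma> = Pw (rf_mult \<gamma>)"
      by (auto simp: decomp_iff rf_const_1)
    have "rf_decomp (\<beta> * \<gamma>) 1 (\<lambda>t. rf_mult \<beta> t + rf_mult \<gamma> t)"
      unfolding decomp_iff rf_const_1 Pw_add[OF fb fg]
    proof (intro conjI)
      show "finite (supp (\<lambda>t. rf_mult \<beta> t + rf_mult \<gamma> t))"
        using fb fg by (rule rev_finite_subset[OF finite_UnI]) (auto simp: supp_def)
      show "\<beta> * \<gamma> = 1 * (Pw (rf_mult \<beta>) * Pw (rf_mult \<gamma>))" using eb eg by simp
    qed simp
    then show "rf_mult (\<beta> * \<gamma>) = (\<lambda>t. rf_mult \<beta> t + rf_mult \<gamma> t)" by (rule rf_decomp_THE)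
  qed
  have inj: "inj_on (\<lambda>\<beta>. (rf_coef \<beta>, rf_mult \<beta>)) (G_sigma a)"
  proof (rule inj_onI)
    fix \<beta> \<gamma> assume b: "\<beta> \<in> G_sigma a" and g: "\<gamma> \<in> G_sigma a"
      and eq: "(rf_coef \<beta>, rf_mult \<beta>) = (rf_coef \<gamma>, rf_mult \<gamma>)"
    have "\<beta> = rf_const 1 * Pw (rf_mult \<beta>)" "\<gamma> = rf_const 1 * Pw (rf_mult \<gamma>)"
      using key[OF b] key[OF g] by (auto simp: decomp_iff)
    then show "\<beta> = \<gamma>" using eq by simp
  qed
  have img: "(\<lambda>\<beta>. (rf_coef \<beta>, rf_mult \<beta>)) ` G_sigma a = {1} \<times> Fsfun_sigma a"
  proof (intro equalityI subsetI)
    fix x assume "x \<in> (\<lambda>\<beta>. (rf_coef \<beta>, rf_mult \<beta>)) ` G_sigma a"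
    then show "x \<in> {1} \<times> Fsfun_sigma a" using key by auto
  next
    fix x :: "'a \<times> ('a \<Rightarrow> int)" assume "x \<in> {1} \<times> Fsfun_sigma a"
    then obtain m where x: "x = (1, m)" and m: "m \<in> Fsfun_sigma a" by auto
    have "cob a m" using m main_cob[of m a] by (simp add: Fsfun_sigma_iff)
    then obtain n where n: "finite (supp n)" "m = (\<lambda>s. n s - n (s + a))" unfolding cob_def by blast
    have dr: "rf_decomp (Pw n) 1 n" using n(1) by (simp add: decomp_iff rf_const_1)
    have d: "rf_decomp (Pw n / rf_shift a (Pw n)) 1 m" unfolding n(2) by (rule G_decomp[OF dr])
    have "Pw n / rf_shift a (Pw n) \<in> G_sigma a" using memG Pw_nz by blast
    moreover have "x = (\<lambda>\<beta>. (rf_coef \<beta>, rf_mult \<beta>)) (Pw n / rf_shift a (Pw n))"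
      using rf_decomp_THE[OF d] x by simp
    ultimately show "x \<in> (\<lambda>\<beta>. (rf_coef \<beta>, rf_mult \<beta>)) ` G_sigma a" by blast
  qed
  have "bij_betw (\<lambda>\<beta>. (rf_coef \<beta>, rf_mult \<beta>)) (G_sigma a) ({1} \<times> Fsfun_sigma a)"
    unfolding bij_betw_def using inj img by (rule conjI)
  then show ?thesis using part2 by blast
qed

end
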